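(* Let $T_C$ and $\mathcal{C}$ be as in the context, and write an element of $\mathcal{C}$ as $[q_0,\dots,q_{m-1},q_m]$. (a) The $LR$-location of $[q_0,\dots,q_{m-1},q_m]$ in $T_C$ is the string $f([q_0,\dots,q_m])=S(q_0,\dots,q_{m-1},q_m-1)$. (b) If $q_0,\dots,q_{m-1}$ are fixed, then the rational value of $[q_0,\dots,q_{m-1},q_m]\in\mathcal{C}$ is an increasing function of $q_m$ if $m$ is even and a decreasing function of $q_m$ if $m$ is odd. (c) The map $f\colon\mathcal{C}\to\{L,R\}^*$ is a bijection which preserves level (the level of $v$ in $T_C$ equals $|f(v)|$), children ($f$ of the left child of $v$ is $f(v)L$, $f$ of the right child is $f(v)R$), and order ($v<v'$ as rational numbers if and only if $r(f(v))<r(f(v'))$). (d) Let $v\in\mathcal{C}$ have level $\ell$, and let $A$ be the set of values of the vertices of $T_C$ of level less than $\ell$ together with $0$ and $\infty$. Then the left parent of $v$ is the largest element of $A$ smaller than $v$, and the right parent of $v$ is the smallest element of $A$ larger than $v$; i.e. the two parents of $v$ are the two closest lower-level approximations to $v$ from below and above.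
   Context: For integers $q_0\geq0$, $q_1,\dots,q_m\geq1$, the continued fraction $[q_0,\dots,q_m]$ denotes the rational $q_0+1/(q_1+1/(\cdots+1/q_m))$, computed by $[q_0]=q_0$ and $[q_0,\dots,q_{m-1},q_m]=[q_0,\dots,q_{m-2},q_{m-1}+1/q_m]$. $T_C$ is the infinite complete binary tree whose vertices are labelled by finite sequences $[q_0,\dots,q_m]$, defined as follows: the root is $[1]$; for a vertex $[q_0,\dots,q_{m-1},q_m]$, if $m$ is even its left child is $[q_0,\dots,q_{m-1},q_m-1,2]$ and its right child is $[q_0,\dots,q_{m-1},q_m+1]$; if $m$ is odd its left child is $[q_0,\dots,q_{m-1},q_m+1]$ and its right child is $[q_0,\dots,q_{m-1},q_m-1,2]$. (All vertices have $q_0\geq0$, $q_1,\dots,q_{m-1}\geq1$, and $q_m\geq2$ if $m>0$.) $\mathcal{C}$ is the set of vertices of $T_C$, ordered by their rational values. The level of a vertex is its distance from the root. $\{L,R\}^*$ is the free monoid on $L,R$ (strings), empty string $\varepsilon$, $|S|$ = number of symbols. The $LR$-location of a vertex is the string of left ($L$) and right ($R$) moves on the path from the root to it. For $k_0\geq0$, $k_1,\dots,k_m\geq1$ (last exponent allowed to be $0$, in which case that block is omitted), $S(k_0,\dots,k_m)$ is the string $R^{k_0}L^{k_1}R^{k_2}\cdots$ with alternating blocks. Define $f([q_0,\dots,q_{m-1},q_m])=S(q_0,\dots,q_{m-1},q_m-1)$. Define $r(\varepsilon)=1$, $r(SL)=r(S)-2^{-|SL|}$, $r(SR)=r(S)+2^{-|SR|}$.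 Parents of a string $S$: $P_L(S)=SR^{-1}$, $P_R(S)=SL^{-1}$, evaluated recursively by $LL^{-1}=\varepsilon$, $RR^{-1}=\varepsilon$, $LR^{-1}=R^{-1}$, $RL^{-1}=L^{-1}$ (and $\varepsilon R^{-1}=R^{-1}$, $\varepsilon L^{-1}=L^{-1}$). The left (resp. right) parent of a vertex $v\in\mathcal{C}$ with $LR$-location $S$ is the vertex with $LR$-location $P_L(S)$ (resp. $P_R(S)$), where the generalized string $R^{-1}$ corresponds to the continued fraction $[0]=0$ and $L^{-1}$ corresponds to the empty continued fraction $[\,]=\infty$. *)

theory Defs
  imports Complex_Main "HOL-Library.Extended_Real"
begin

datatype lr = L | R

(* value of the continued fraction [q0,...,qm] = q0 + 1/(q1 + 1/(... + 1/qm)); only used on nonempty lists *)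
fun cfval :: "nat list \<Rightarrow> real" where
  "cfval [] = 0"
| "cfval [q] = real q"
| "cfval (q # q' # qs) = real q + 1 / cfval (q' # qs)"

(* children in T_C; m = length qs - 1 *)
definition left_child :: "nat list \<Rightarrow> nat list" where
  "left_child qs = (if even (length qs - 1)
      then butlast qs @ [last qs - 1, 2]
      else butlast qs @ [last qs + 1])"

definition right_child :: "nat list \<Rightarrow> nat list" where
  "right_child qs = (if even (length qs - 1)
      then butlast qs @ [last qs + 1]
      else butlast qs @ [last qs - 1, 2])"

definition child :: "lr \<Rightarrow> nat list \<Rightarrow> nat list" where
  "child d v = (if d = L then left_child v else right_child v)"

definition vert :: "lr list \<Rightarrow> nat list" where
  "vert S = fold child S [1]"

definition CF :: "nat list set" where
  "CF = range vert"

fun Sgo :: "lr \<Rightarrow> nat list \<Rightarrow> lr list" where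
  "Sgo d [] = []"
| "Sgo d (k # ks) = replicate k d @ Sgo (if d = R then L else R) ks"

definition Sblk :: "nat list \<Rightarrow> lr list" where
  "Sblk ks = Sgo R ks"

definition f :: "nat list \<Rightarrow> lr list" where
  "f qs = Sblk (butlast qs @ [last qs - 1])"

(* r(eps) = 1, r(SL) = r(S) - 2^-|SL|, r(SR) = r(S) + 2^-|SR|; rrev works on the reversed string *)
fun rrev :: "lr list \<Rightarrow> real" where
  "rrev [] = 1"
| "rrev (d # T) = rrev T + (if d = R then 1 else -1) / 2 ^ (length T + 1)"

definition rval :: "lr list \<Rightarrow> real" where
  "rval S = rrev (rev S)"

(* S x^{-1} evaluated by the cancellation rules, on the reversed string;
   None stands for the generalized string x^{-1} *)
fun cancel_rev :: "lr \<Rightarrow> lr list \<Rightarrow> lr list option" where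
  "cancel_rev x [] = None"
| "cancel_rev x (y # T) = (if y = x then Some T else cancel_rev x T)"

definition PL :: "lr list \<Rightarrow> lr list option" where
  "PL S = map_option rev (cancel_rev R (rev S))"

definition PR :: "lr list \<Rightarrow> lr list option" where
  "PR S = map_option rev (cancel_rev L (rev S))"

(* value of the left parent (R^{-1} ~ [0] = 0) and right parent (L^{-1} ~ [] = \<infinity>) *)
definition lpval :: "lr list \<Rightarrow> ereal" where
  "lpval S = (case PL S of None \<Rightarrow> 0 | Some S' \<Rightarrow> ereal (cfval (vert S')))"

definition rpval :: "lr list \<Rightarrow> ereal" where
  "rpval S = (case PR S of None \<Rightarrow> \<infinity> | Some S' \<Rightarrow> ereal (cfval (vert S')))"

end

theory Submission
  imports Defs
begin


fun cfr :: "nat list \<Rightarrow> real \<Rightarrow> real" where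
  "cfr [] t = t"
| "cfr (x # xs) t = real x + 1 / cfr xs t"

lemma cfval_cons: "ys \<noteq> [] \<Longrightarrow> cfval (x # ys) = real x + 1 / cfval ys"
  by (cases ys) auto

lemma cfval_snoc: "cfval (xs @ [b]) = cfr xs (real b)"
  by (induction xs) (auto simp: cfval_cons)

lemma cfr_snoc: "cfr (xs @ [b]) t = cfr xs (real b + 1 / t)"
  by (induction xs) auto

lemma cfr_pos: "\<forall>y\<in>set xs. y \<ge> 1 \<Longrightarrow> 0 < t \<Longrightarrow> 0 < cfr xs t"
proof (induction xs)
  case (Cons x xs)
  then have "0 < cfr xs t" "real x \<ge> 1" by auto
  then show ?case by (simp add: add_pos_pos)
qed simp

lemma inv_flip: "0 < a \<Longrightarrow> 0 < b \<Longrightarrow> a < b \<Longrightarrow> 1 / b < 1 / (a::real)"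
  by (simp add: frac_less2)

lemma cfr_mono: "\<forall>y\<in>set xs. y \<ge> 1 \<Longrightarrow> 0 < s \<Longrightarrow> s < t \<Longrightarrow>
  (if even (length xs) then cfr xs s < cfr xs t else cfr xs t < cfr xs s)"
proof (induction xs)
  case (Cons x xs)
  have ps: "0 < cfr xs s" and pt: "0 < cfr xs t" using Cons.prems cfr_pos by auto
  from Cons have IH: "if even (length xs) then cfr xs s < cfr xs t else cfr xs t < cfr xs s" by auto
  show ?case using IH ps pt inv_flip by (auto split: if_splits)
qed simp

lemma cfr_mono': "\<forall>y\<in>set (tl xs). y \<ge> 1 \<Longrightarrow> xs = [] \<or> 0 < s \<Longrightarrow> s < t \<Longrightarrow>
  (if even (length xs) then cfr xs s < cfr xs t else cfr xs t < cfr xs s)"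
proof (cases xs)
  case (Cons x ys)
  assume a: "\<forall>y\<in>set (tl xs). y \<ge> 1" "xs = [] \<or> 0 < s" "s < t"
  have ps: "0 < cfr ys s" and pt: "0 < cfr ys t" using a Cons cfr_pos by auto
  have IH: "if even (length ys) then cfr ys s < cfr ys t else cfr ys t < cfr ys s"
    using cfr_mono[of ys s t] a Cons by auto
  show ?thesis using IH ps pt inv_flip Cons by (auto split: if_splits)
qed simp

definition wf :: "nat list \<Rightarrow> bool" where
  "wf qs \<longleftrightarrow> (\<exists>p a. qs = p @ [a] \<and> (\<forall>y\<in>set (tl p). y \<ge> 1) \<and> a \<ge> 1 \<and> (p \<noteq> [] \<longrightarrow> a \<ge> 2))"

lemma lc_snoc: "left_child (p @ [a]) = (if even (length p) then p @ [a - 1, 2] else p @ [a + 1])"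
  by (simp add: left_child_def)

lemma rc_snoc: "right_child (p @ [a]) = (if even (length p) then p @ [a + 1] else p @ [a - 1, 2])"
  by (simp add: right_child_def)

lemma tl_snoc: "tl (p @ [x]) = (if p = [] then [] else tl p @ [x])"
  by (cases p) auto

lemma wf_children: "wf v \<Longrightarrow> wf (left_child v) \<and> wf (right_child v)"
proof -
  assume "wf v"
  then obtain p a where v: "v = p @ [a]" and t: "\<forall>y\<in>set (tl p). y \<ge> 1" and a: "a \<ge> 1" "p \<noteq> [] \<longrightarrow> a \<ge> 2"
    unfolding wf_def by blast
  have w1: "wf (p @ [a + 1])" unfolding wf_def using t a by auto
  have "wf ((p @ [a - 1]) @ [2])" unfolding wf_def using t a
    by (intro exI[of _ "p @ [a - 1]"] exI[of _ 2]) (auto simp: tl_snoc)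
  then have w2: "wf (p @ [a - 1, 2])" by simp
  show ?thesis using w1 w2 v by (simp add: lc_snoc rc_snoc)
qed

lemma vert_snoc: "vert (S @ [d]) = child d (vert S)"
  by (simp add: vert_def)

lemma vert_Nil: "vert [] = [1]"
  by (simp add: vert_def)

lemma wf_vert: "wf (vert S)"
proof (induction S rule: rev_induct)
  case Nil
  show ?case unfolding vert_Nil wf_def by (intro exI[of _ "[]"] exI[of _ 1]) auto
next
  case (snoc d S)
  then show ?case using wf_children by (simp add: vert_snoc child_def)
qed

lemma Sgo_snoc: "Sgo d (xs @ [k]) = Sgo d xs @ replicate k (if even (length xs) then d else (if d = R then L else R))"
  by (induction xs arbitrary: d) (auto, metis lr.exhaust)

lemma f_snoc: "f (p @ [a]) = Sgo R p @ replicate (a - 1) (if even (length p) then R else L)"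
  by (simp add: f_def Sblk_def Sgo_snoc)

lemma f_children: "wf v \<Longrightarrow> f (left_child v) = f v @ [L] \<and> f (right_child v) = f v @ [R]"
proof -
  assume "wf v"
  then obtain p a where v: "v = p @ [a]" and a: "a \<ge> 1"
    unfolding wf_def by blast
  obtain k where k: "a = Suc k" using a by (cases a) auto
  have e1: "f (p @ [a - 1, 2]) = f v @ [if even (length p) then L else R]"
  proof -
    have "f (p @ [a - 1, 2]) = f ((p @ [a - 1]) @ [2])" by simp
    also have "\<dots> = Sgo R p @ replicate (a - 1) (if even (length p) then R else L) @ [if even (length p) then L else R]"
      unfolding f_snoc by (simp add: Sgo_snoc)
    finally show ?thesis using v f_snoc by simp
  qed
  have e2: "f (p @ [a + 1]) = f v @ [if even (length p) then R else L]"
    using v k by (simp add: f_snoc replicate_append_same)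
  show ?thesis using e1 e2 v by (simp add: lc_snoc rc_snoc)
qed

lemma f_vert: "f (vert S) = S"
proof (induction S rule: rev_induct)
  case Nil
  show ?case by (simp add: vert_Nil f_def Sblk_def)
next
  case (snoc d S)
  then show ?case using f_children[OF wf_vert[of S]] by (cases d) (simp_all add: vert_snoc child_def)
qed

definition P1 :: "nat list \<Rightarrow> ereal" where
  "P1 qs = (if butlast qs = [] then \<infinity> else ereal (cfval (butlast qs)))"
definition P2 :: "nat list \<Rightarrow> ereal" where
  "P2 qs = ereal (cfr (butlast qs) (real (last qs) - 1))"
definition loq :: "nat list \<Rightarrow> ereal" where
  "loq qs = (if even (length qs - 1) then P2 qs else P1 qs)"
definition hiq :: "nat list \<Rightarrow> ereal" where
  "hiq qs = (if even (length qs - 1) then P1 qs else P2 qs)"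

lemma interval: "wf v \<Longrightarrow> loq v < ereal (cfval v) \<and> ereal (cfval v) < hiq v"
proof -
  assume "wf v"
  then obtain p a where v: "v = p @ [a]" and t: "\<forall>y\<in>set (tl p). y \<ge> 1" and a: "a \<ge> 1" "p \<noteq> [] \<longrightarrow> a \<ge> 2"
    unfolding wf_def by blast
  have cv: "cfval v = cfr p (real a)" using v cfval_snoc by simp
  have A1: "if even (length p) then cfr p (real a - 1) < cfr p (real a) else cfr p (real a) < cfr p (real a - 1)"
    using cfr_mono'[of p "real a - 1" "real a"] t a by force
  have A2: "if even (length p) then cfr p (real a) < cfval p else cfval p < cfr p (real a)" if "p \<noteq> []"
  proof -
    obtain p' c where p: "p = p' @ [c]" using \<open>p \<noteq> []\<close> by (metis rev_exhaust)
    have t': "\<forall>y\<in>set (tl p'). y \<ge> 1" using t p by (auto simp: tl_snoc split: if_splits)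
    have c: "p' = [] \<or> 0 < real c" using t p by (auto simp: tl_snoc split: if_splits)
    have "0 < 1 / real a" using a by simp
    then have "if even (length p') then cfr p' (real c) < cfr p' (real c + 1 / real a)
       else cfr p' (real c + 1 / real a) < cfr p' (real c)"
      using cfr_mono'[of p' "real c" "real c + 1 / real a"] t' c by auto
    then show ?thesis using p by (simp add: cfval_snoc cfr_snoc)
  qed
  show ?thesis
  proof (cases "p = []")
    case True
    then show ?thesis using A1 v cv by (simp add: loq_def hiq_def P1_def P2_def)
  next
    case False
    then show ?thesis using A1 A2 v cv by (auto simp: loq_def hiq_def P1_def P2_def)
  qed
qed

lemma children_bounds: "wf v \<Longrightarrow> loq (left_child v) = loq v \<and> hiq (left_child v) = ereal (cfval v)
  \<and> loq (right_child v) = ereal (cfval v) \<and> hiq (right_child v) = hiq v"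
proof -
  assume "wf v"
  then obtain p a where v: "v = p @ [a]" and a: "a \<ge> 1"
    unfolding wf_def by blast
  have cv: "cfval v = cfr p (real a)" using v cfval_snoc by simp
  have r1: "real (a - 1) = real a - 1" using a by simp
  have b1: "cfr (p @ [a - 1]) (real 2 - 1) = cfr p (real a)" using r1 by (simp add: cfr_snoc)
  have b2: "cfval (p @ [a - 1]) = cfr p (real a - 1)" using r1 by (simp add: cfval_snoc)
  show ?thesis using v cv b1 b2
    by (auto simp: lc_snoc rc_snoc loq_def hiq_def P1_def P2_def butlast_append)
qed


fun lt :: "lr list \<Rightarrow> lr list \<Rightarrow> bool" where
  "lt [] [] = False"
| "lt [] (d # T) = (d = R)"
| "lt (d # T) [] = (d = L)"
| "lt (d1 # T1) (d2 # T2) = (if d1 = d2 then lt T1 T2 else d1 = L)"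

lemma order_lt:
  fixes g :: "lr list \<Rightarrow> real"
  assumes D: "\<forall>S T. g (S @ L # T) < g S \<and> g S < g (S @ R # T)"
  shows "g (P @ S1) < g (P @ S2) \<longleftrightarrow> lt S1 S2"
proof (induction S1 arbitrary: S2 P)
  case Nil
  show ?case
  proof (cases S2)
    case (Cons d T)
    then show ?thesis using D[rule_format, of P T] by (cases d) auto
  qed simp
next
  case (Cons d1 T1)
  show ?case
  proof (cases S2)
    case Nil
    then show ?thesis using D[rule_format, of P T1] by (cases d1) auto
  next
    case (Cons d2 T2)
    show ?thesis
    proof (cases "d1 = d2")
      case True
      then show ?thesis using Cons.IH[of "P @ [d1]" T2] Cons by simp
    next
      case False
      then show ?thesis using D[rule_format, of P T1] D[rule_format, of P T2] Cons
        by (cases d1; cases d2) auto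
    qed
  qed
qed

lemma rval_snoc: "rval (S @ [d]) = rval S + (if d = R then 1 else -1) / 2 ^ (length S + 1)"
  by (simp add: rval_def)

lemma rval_bound: "\<bar>rval (S @ T) - rval S\<bar> \<le> 1 / 2 ^ length S - 1 / 2 ^ (length S + length T)"
proof (induction T rule: rev_induct)
  case (snoc d T)
  have e: "rval (S @ T @ [d]) = rval (S @ T) + (if d = R then 1 else -1) / 2 ^ (length S + length T + 1)"
    using rval_snoc[of "S @ T" d] by simp
  define k where "k = length S + length T"
  have h: "(1::real) / 2 ^ k = 2 * (1 / 2 ^ (k + 1))" by simp
  have ad: "\<bar>(if d = R then 1 else -1) / 2 ^ (k + 1)\<bar> = (1::real) / 2 ^ (k + 1)" by simp
  have "\<bar>rval (S @ T @ [d]) - rval S\<bar> \<le> \<bar>rval (S @ T) - rval S\<bar> + \<bar>(if d = R then 1 else -1) / 2 ^ (k + 1)\<bar>"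
    unfolding e k_def[symmetric] by (rule order_trans[OF _ abs_triangle_ineq]) simp
  also have "\<dots> \<le> 1 / 2 ^ length S - 1 / 2 ^ k + 1 / 2 ^ (k + 1)"
    using snoc.IH ad unfolding k_def by simp
  also have "\<dots> = 1 / 2 ^ length S - 1 / 2 ^ (k + 1)" using h by simp
  finally show ?case by (simp add: k_def)
qed simp

lemma rval_desc: "rval (S @ L # T) < rval S \<and> rval S < rval (S @ R # T)"
proof -
  have b1: "\<bar>rval ((S @ [d]) @ T) - rval (S @ [d])\<bar> < 1 / 2 ^ (length S + 1)" for d
  proof -
    have B: "\<bar>rval (S @ d # T) - rval (S @ [d])\<bar> \<le> 1 / (2 * 2 ^ length S) - 1 / (2 * 2 ^ (length S + length T))"
      using rval_bound[of "S @ [d]" T] by simp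
    have P: "0 < 1 / (2 * 2 ^ (length S + length T) :: real)" by simp
    from B P have "\<bar>rval (S @ d # T) - rval (S @ [d])\<bar> < 1 / (2 * 2 ^ length S)" by linarith
    then show ?thesis by simp
  qed
  have "rval (S @ [L]) = rval S - 1 / 2 ^ (length S + 1)" "rval (S @ [R]) = rval S + 1 / 2 ^ (length S + 1)"
    using rval_snoc by auto
  moreover have "rval (S @ L # T) = rval ((S @ [L]) @ T)" "rval (S @ R # T) = rval ((S @ [R]) @ T)" by simp_all
  ultimately show ?thesis using b1[of L] b1[of R] unfolding abs_less_iff by linarith
qed

definition val :: "lr list \<Rightarrow> real" where "val S = cfval (vert S)"
definition lo :: "lr list \<Rightarrow> ereal" where "lo S = loq (vert S)"
definition hi :: "lr list \<Rightarrow> ereal" where "hi S = hiq (vert S)"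

lemma lohi_snoc: "lo (S @ [L]) = lo S \<and> hi (S @ [L]) = ereal (val S) \<and> lo (S @ [R]) = ereal (val S) \<and> hi (S @ [R]) = hi S"
  using children_bounds[OF wf_vert[of S]] by (simp add: lo_def hi_def val_def vert_snoc child_def)

lemma int_S: "lo S < ereal (val S) \<and> ereal (val S) < hi S"
  using interval[OF wf_vert[of S]] by (simp add: lo_def hi_def val_def)

lemma nest: "lo S \<le> lo (S @ T) \<and> hi (S @ T) \<le> hi S"
proof (induction T rule: rev_induct)
  case (snoc d T)
  have "lo (S @ T) < ereal (val (S @ T))" "ereal (val (S @ T)) < hi (S @ T)" using int_S by auto
  then show ?case using snoc lohi_snoc[of "S @ T"] by (cases d) (auto simp del: append_assoc simp: append_assoc[symmetric])
qed simp

lemma val_desc: "val (S @ L # T) < val S \<and> val S < val (S @ R # T)"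
proof -
  have "ereal (val ((S @ [L]) @ T)) < hi ((S @ [L]) @ T)" using int_S by blast
  also have "\<dots> \<le> hi (S @ [L])" using nest by blast
  finally have 1: "val (S @ L # T) < val S" using lohi_snoc by simp
  have "lo (S @ [R]) \<le> lo ((S @ [R]) @ T)" using nest by blast
  also have "\<dots> < ereal (val ((S @ [R]) @ T))" using int_S by blast
  finally have 2: "val S < val (S @ R # T)" using lohi_snoc by simp
  show ?thesis using 1 2 by simp
qed

lemma val_lt: "val S1 < val S2 \<longleftrightarrow> lt S1 S2"
  using order_lt[of val "[]"] val_desc by simp

lemma rval_lt: "rval S1 < rval S2 \<longleftrightarrow> lt S1 S2"
  using order_lt[of rval "[]"] rval_desc by simp

lemma PL_snoc: "PL (S @ [R]) = Some S" "PL (S @ [L]) = PL S" "PL [] = None"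
  by (simp_all add: PL_def)

lemma PR_snoc: "PR (S @ [L]) = Some S" "PR (S @ [R]) = PR S" "PR [] = None"
  by (simp_all add: PR_def)

lemma lo_Nil: "lo [] = 0" and hi_Nil: "hi [] = \<infinity>"
  by (simp_all add: lo_def hi_def vert_Nil loq_def hiq_def P1_def P2_def zero_ereal_def)

lemma lp_lo: "lpval S = lo S"
proof (induction S rule: rev_induct)
  case Nil then show ?case by (simp add: lpval_def PL_snoc lo_Nil)
next
  case (snoc d S)
  then show ?case using lohi_snoc[of S]
    by (cases d) (simp_all add: lpval_def PL_snoc val_def)
qed

lemma rp_hi: "rpval S = hi S"
proof (induction S rule: rev_induct)
  case Nil then show ?case by (simp add: rpval_def PR_snoc hi_Nil)
next
  case (snoc d S)
  then show ?case using lohi_snoc[of S]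
    by (cases d) (simp_all add: rpval_def PR_snoc val_def)
qed

lemma claim: "lo S < ereal (val T) \<Longrightarrow> ereal (val T) < hi S \<Longrightarrow> \<exists>U. T = S @ U"
proof (induction S arbitrary: T rule: rev_induct)
  case Nil then show ?case by simp
next
  case (snoc d S)
  have iS: "lo S < ereal (val S)" "ereal (val S) < hi S" using int_S by auto
  show ?case
  proof (cases d)
    case L
    then have a: "lo S < ereal (val T)" "val T < val S" using snoc.prems lohi_snoc[of S] by auto
    have "ereal (val T) < ereal (val S)" using a by simp
    then have "ereal (val T) < hi S" using iS(2) by (rule less_trans)
    then obtain U where U: "T = S @ U" using snoc.IH a by blast
    show ?thesis
    proof (cases U)
      case Nil then show ?thesis using a U by simp
    next
      case (Cons d' U')
      then show ?thesis using a U val_desc[of S U'] L by (cases d') auto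
    qed
  next
    case R
    then have a: "ereal (val T) < hi S" "val S < val T" using snoc.prems lohi_snoc[of S] by auto
    have "ereal (val S) < ereal (val T)" using a by simp
    then have "lo S < ereal (val T)" using iS(1) by (rule less_trans[rotated])
    then obtain U where U: "T = S @ U" using snoc.IH a by blast
    show ?thesis
    proof (cases U)
      case Nil then show ?thesis using a U by simp
    next
      case (Cons d' U')
      then show ?thesis using a U val_desc[of S U'] R by (cases d') auto
    qed
  qed
qed

lemma lo_nonneg: "0 \<le> lo S"
  using nest[of "[]" S] lo_Nil by simp

lemma cancel_len: "cancel_rev x T = Some T' \<Longrightarrow> length T' < length T"
  by (induction T) (auto split: if_splits)

lemma PL_len: "PL S = Some S' \<Longrightarrow> length S' < length S"
  unfolding PL_def using cancel_len by fastforce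

lemma PR_len: "PR S = Some S' \<Longrightarrow> length S' < length S"
  unfolding PR_def using cancel_len by fastforce

lemma part_b: "wf (qs @ [a]) \<Longrightarrow> a < b \<Longrightarrow>
  (if even (length qs) then cfval (qs @ [a]) < cfval (qs @ [b]) else cfval (qs @ [a]) > cfval (qs @ [b]))"
proof -
  assume w: "wf (qs @ [a])" and ab: "a < b"
  then have t: "\<forall>y\<in>set (tl qs). y \<ge> 1" and c: "qs \<noteq> [] \<longrightarrow> a \<ge> 2" unfolding wf_def by auto
  have "qs = [] \<or> 0 < real a" using c by auto
  then show ?thesis using cfr_mono'[of qs "real a" "real b"] t ab by (simp add: cfval_snoc)
qed

lemma part_d: "let A = {ereal (cfval (vert T)) | T. length T < length S} \<union> {0, \<infinity>};
              x = ereal (cfval (vert S)) in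
        (lpval S \<in> A \<and> lpval S < x \<and> (\<forall>a\<in>A. a < x \<longrightarrow> a \<le> lpval S))
      \<and> (rpval S \<in> A \<and> x < rpval S \<and> (\<forall>a\<in>A. x < a \<longrightarrow> rpval S \<le> a))"
proof -
  define A where "A = {ereal (cfval (vert T)) | T. length T < length S} \<union> {0, \<infinity>}"
  define x where "x = ereal (cfval (vert S))"
  have x: "x = ereal (val S)" by (simp add: x_def val_def)
  have iS: "lo S < x" "x < hi S" using int_S x by auto
  have l0: "0 \<le> lo S" by (rule lo_nonneg)
  have lA: "lpval S \<in> A"
  proof (cases "PL S")
    case None then show ?thesis by (simp add: lpval_def A_def)
  next
    case (Some S') then show ?thesis using PL_len[OF Some] by (auto simp: lpval_def A_def)
  qed
  have rA: "rpval S \<in> A"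
  proof (cases "PR S")
    case None then show ?thesis by (simp add: rpval_def A_def)
  next
    case (Some S') then show ?thesis using PR_len[OF Some] by (auto simp: rpval_def A_def)
  qed
  have key: "\<not> (lo S < ereal (val T) \<and> ereal (val T) < hi S)" if "length T < length S" for T
    using claim[of S T] that by auto
  have lmax: "a \<le> lpval S" if "a \<in> A" "a < x" for a
  proof -
    consider (v) T where "a = ereal (val T)" "length T < length S" | "a = 0" | "a = \<infinity>"
      using \<open>a \<in> A\<close> unfolding A_def val_def by auto
    then show ?thesis
    proof cases
      case v
      have "ereal (val T) < hi S" using v that iS by (metis less_trans)
      then show ?thesis using key[OF v(2)] v lp_lo by (metis not_le)
    qed (use that l0 lp_lo in auto)
  qed
  have rmin: "rpval S \<le> a" if "a \<in> A" "x < a" for a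
  proof -
    consider (v) T where "a = ereal (val T)" "length T < length S" | "a = 0" | "a = \<infinity>"
      using \<open>a \<in> A\<close> unfolding A_def val_def by auto
    then show ?thesis
    proof cases
      case v
      have "lo S < ereal (val T)" using v that iS by (metis less_trans)
      then show ?thesis using key[OF v(2)] v rp_hi by (metis not_le)
    next
      case 2
      then have False using that iS l0 by (metis less_trans not_le)
      then show ?thesis ..
    qed simp
  qed
  show ?thesis unfolding Let_def A_def[symmetric] x_def[symmetric]
    using lA rA lmax rmin iS lp_lo rp_hi by auto
qed

theorem theorem4:
  shows
    \<comment> \<open>(a)\<close>
    "(\<forall>S. f (vert S) = S)
   \<and> \<comment> \<open>(b)\<close>
     (\<forall>qs a b. qs @ [a] \<in> CF \<longrightarrow> qs @ [b] \<in> CF \<longrightarrow> a < b \<longrightarrow>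
        (if even (length qs) then cfval (qs @ [a]) < cfval (qs @ [b])
         else cfval (qs @ [a]) > cfval (qs @ [b])))
   \<and> \<comment> \<open>(c)\<close>
     bij_betw f CF UNIV
   \<and> (\<forall>S. length (f (vert S)) = length S)
   \<and> (\<forall>v\<in>CF. f (left_child v) = f v @ [L] \<and> f (right_child v) = f v @ [R])
   \<and> (\<forall>v\<in>CF. \<forall>v'\<in>CF. cfval v < cfval v' \<longleftrightarrow> rval (f v) < rval (f v'))
   \<and> \<comment> \<open>(d)\<close>
     (\<forall>S. let A = {ereal (cfval (vert T)) | T. length T < length S} \<union> {0, \<infinity>};
              x = ereal (cfval (vert S)) in
        (lpval S \<in> A \<and> lpval S < x \<and> (\<forall>a\<in>A. a < x \<longrightarrow> a \<le> lpval S))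
      \<and> (rpval S \<in> A \<and> x < rpval S \<and> (\<forall>a\<in>A. x < a \<longrightarrow> rpval S \<le> a)))"
proof (intro conjI allI impI ballI)
  show "f (vert S) = S" for S by (rule f_vert)
  show "length (f (vert S)) = length S" for S by (simp add: f_vert)
  show "if even (length qs) then cfval (qs @ [a]) < cfval (qs @ [b]) else cfval (qs @ [a]) > cfval (qs @ [b])"
    if "qs @ [a] \<in> CF" "a < b" for qs a b
  proof -
    have "wf (qs @ [a])" using that(1) wf_vert unfolding CF_def by auto
    then show ?thesis using part_b that(2) by blast
  qed
  show "bij_betw f CF UNIV"
    unfolding bij_betw_def inj_on_def CF_def
  proof (intro conjI ballI impI)
    show "x = y" if "x \<in> range vert" "y \<in> range vert" "f x = f y" for x y
      using that f_vert by auto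
    show "f ` range vert = UNIV"
      by (auto simp: image_iff f_vert intro: exI[where x = "vert _"])
  qed
  show "f (left_child v) = f v @ [L]" "f (right_child v) = f v @ [R]" if "v \<in> CF" for v
    using that f_children wf_vert unfolding CF_def by auto
  show "cfval v < cfval v' \<longleftrightarrow> rval (f v) < rval (f v')" if vC: "v \<in> CF" "v' \<in> CF" for v v'
  proof -
    obtain S S' where "v = vert S" "v' = vert S'" using vC unfolding CF_def by blast
    then show ?thesis using val_lt[of S S'] rval_lt[of S S'] f_vert by (simp add: val_def)
  qed
  show "let A = {ereal (cfval (vert T)) | T. length T < length S} \<union> {0, \<infinity>};
              x = ereal (cfval (vert S)) in
        (lpval S \<in> A \<and> lpval S < x \<and> (\<forall>a\<in>A. a < x \<longrightarrow> a \<le> lpval S))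
      \<and> (rpval S \<in> A \<and> x < rpval S \<and> (\<forall>a\<in>A. x < a \<longrightarrow> rpval S \<le> a))" for S
    by (rule part_d)
qed

end
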